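(* Let $\{\xi_{pq}:\mathbf A_p\Rightarrow\mathbf A_q: p\preceq q\text{ in }\mathbf I\}$ be a semilattice directed system of metamorphisms of algebras of type $\tau$ (with $\mathbf I$ having a least element if $\tau$ has constants) and let $\mathbf A$ be its Płonka sum. For each $n$-ary symbol $\sigma$ and $0\le i\le n$ define $a\odot^\sigma_i b:=\xi^{\sigma i}_{ps}(a)$ for $a\in A_p$, $b\in A_q$, $s:=p\vee q$. Then $\sigma\mapsto\langle\odot^\sigma_0,\dots,\odot^\sigma_n\rangle$ is a partition system for $\mathbf A$; the classes of the common equivalence $\equiv_\odot$ are exactly the sets $A_p$, with $a\preceq_\odot b$ iff $p\preceq q$ for $a\in A_p,b\in A_q$; and the directed system induced by this partition system (via $\xi'^{\sigma i}_{pq}(a)=a\odot^\sigma_i b$ for any $b\in A_q$) coincides with the given one, i.e. $a\odot^\sigma_i b=\xi^{\sigma i}_{pq}(a)$ for $p\preceq q$, $a\in A_p$, $b\in A_q$.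
   Context: A left normal band on a set $A$ is a binary operation $\odot$ with $a\odot a=a$, $a\odot(b\odot c)=(a\odot b)\odot c$, $a\odot(b\odot c)=a\odot(c\odot b)$. Put $a\preceq_\odot b\iff b\odot a=b$, and $a\equiv_\odot b$ iff $a\preceq_\odot b$ and $b\preceq_\odot a$. Left normal bands $\odot,\otimes$ are homotactic if $\preceq_\odot=\preceq_\otimes$. For an algebra $\mathbf A$ of type $\tau$, a partition system assigns to each $n$-ary symbol $\sigma$ (constants: $n=0$) a tuple $\langle\odot^\sigma_0,\dots,\odot^\sigma_n\rangle$ of pairwise homotactic left normal bands (homotactic across all $\sigma$) such that for all $a_i,b$: if $n\ge1$, $\sigma^{\mathbf A}(a_1,\dots,a_n)\odot^\sigma_0b=\sigma^{\mathbf A}(a_1\odot^\sigma_1b,\dots,a_n\odot^\sigma_nb)$; and $b\odot^\sigma_0\sigma^{\mathbf A}(a_1,\dots,a_n)=b\odot^\sigma_0a_1\odot^\sigma_0\cdots\odot^\sigma_0a_n$ (for constants $\omega$: $b\odot^\omega_0\omega^{\mathbf A}=b$). A metamorphism $f:\mathbf A\Rightarrow\mathbf B$ assigns to each $n$-ary $\sigma$ maps $f^{\sigma0},\dots,f^{\sigma n}:A\to B$ with $f^{\sigma0}(\sigma^{\mathbf A}(a_1,\dots,a_n))=\sigma^{\mathbf B}(f^{\sigma1}(a_1),\dots,f^{\sigma n}(a_n))$; composition is componentwise. A semilattice directed system of metamorphisms over a join-semilattice $\mathbf I=\langle I,\vee\rangle$ (order $\preceq$) is a family of pairwise disjoint algebras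 $\mathbf A_p$ with metamorphisms $\xi_{pq}:\mathbf A_p\Rightarrow\mathbf A_q$ ($p\preceq q$), $\xi_{pp}$ identity, $\xi_{qr}\circ\xi_{pq}=\xi_{pr}$. Its Płonka sum is the algebra on $\biguplus_pA_p$ with $\sigma(a_1,\dots,a_n):=\sigma^{\mathbf A_q}(\xi^{\sigma1}_{p_1q}(a_1),\dots,\xi^{\sigma n}_{p_nq}(a_n))$ for $a_i\in A_{p_i}$, $q=p_1\vee\dots\vee p_n$, and $\omega:=\omega^{\mathbf A_\bot}$ for constants, $\bot$ the least element of $\mathbf I$. *)

theory Defs
  imports Main
begin

text \<open>A type \<tau> is given by an arity function ar :: 's => nat on the symbols 's.\<close>

definition is_algebra :: "('s \<Rightarrow> nat) \<Rightarrow> 'a set \<Rightarrow> ('s \<Rightarrow> 'a list \<Rightarrow> 'a) \<Rightarrow> bool" where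
  "is_algebra ar S f \<longleftrightarrow> S \<noteq> {} \<and>
     (\<forall>\<sigma> xs. length xs = ar \<sigma> \<and> set xs \<subseteq> S \<longrightarrow> f \<sigma> xs \<in> S)"

definition metamorphism :: "('s \<Rightarrow> nat) \<Rightarrow> 'a set \<Rightarrow> ('s \<Rightarrow> 'a list \<Rightarrow> 'a)
    \<Rightarrow> 'a set \<Rightarrow> ('s \<Rightarrow> 'a list \<Rightarrow> 'a) \<Rightarrow> ('s \<Rightarrow> nat \<Rightarrow> 'a \<Rightarrow> 'a) \<Rightarrow> bool" where
  "metamorphism ar SA fA SB fB h \<longleftrightarrow>
     (\<forall>\<sigma> i. i \<le> ar \<sigma> \<longrightarrow> h \<sigma> i ` SA \<subseteq> SB) \<and>
     (\<forall>\<sigma> xs. length xs = ar \<sigma> \<and> set xs \<subseteq> SA \<longrightarrow>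
        h \<sigma> 0 (fA \<sigma> xs) = fB \<sigma> (map (\<lambda>i. h \<sigma> (Suc i) (xs ! i)) [0..<ar \<sigma>]))"

definition sl_directed_system :: "('s \<Rightarrow> nat) \<Rightarrow> ('i::semilattice_sup \<Rightarrow> 'a set)
    \<Rightarrow> ('i \<Rightarrow> 's \<Rightarrow> 'a list \<Rightarrow> 'a) \<Rightarrow> ('i \<Rightarrow> 'i \<Rightarrow> 's \<Rightarrow> nat \<Rightarrow> 'a \<Rightarrow> 'a) \<Rightarrow> bool" where
  "sl_directed_system ar A opA xi \<longleftrightarrow>
     (\<forall>p. is_algebra ar (A p) (opA p)) \<and>
     (\<forall>p q. p \<noteq> q \<longrightarrow> A p \<inter> A q = {}) \<and>
     (\<forall>p q. p \<le> q \<longrightarrow> metamorphism ar (A p) (opA p) (A q) (opA q) (xi p q)) \<and>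
     (\<forall>p \<sigma> i a. i \<le> ar \<sigma> \<and> a \<in> A p \<longrightarrow> xi p p \<sigma> i a = a) \<and>
     (\<forall>p q r \<sigma> i a. p \<le> q \<and> q \<le> r \<and> i \<le> ar \<sigma> \<and> a \<in> A p \<longrightarrow>
        xi q r \<sigma> i (xi p q \<sigma> i a) = xi p r \<sigma> i a)"

definition idx :: "('i \<Rightarrow> 'a set) \<Rightarrow> 'a \<Rightarrow> 'i" where
  "idx A a = (THE p. a \<in> A p)"

fun joinl :: "'i::semilattice_sup list \<Rightarrow> 'i" where
  "joinl [] = undefined"
| "joinl [p] = p"
| "joinl (p # q # ps) = sup p (joinl (q # ps))"

definition plonka_carrier :: "('i \<Rightarrow> 'a set) \<Rightarrow> 'a set" where
  "plonka_carrier A = \<Union> (range A)"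

definition plonka_op :: "('s \<Rightarrow> nat) \<Rightarrow> ('i::semilattice_sup \<Rightarrow> 'a set)
    \<Rightarrow> ('i \<Rightarrow> 's \<Rightarrow> 'a list \<Rightarrow> 'a) \<Rightarrow> ('i \<Rightarrow> 'i \<Rightarrow> 's \<Rightarrow> nat \<Rightarrow> 'a \<Rightarrow> 'a) \<Rightarrow> 's \<Rightarrow> 'a list \<Rightarrow> 'a" where
  "plonka_op ar A opA xi \<sigma> xs =
     (if ar \<sigma> = 0 then opA (LEAST p. True) \<sigma> []
      else (let q = joinl (map (idx A) xs)
            in opA q \<sigma> (map (\<lambda>i. xi (idx A (xs ! i)) q \<sigma> (Suc i) (xs ! i)) [0..<ar \<sigma>])))"

definition left_normal_band :: "'a set \<Rightarrow> ('a \<Rightarrow> 'a \<Rightarrow> 'a) \<Rightarrow> bool" where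
  "left_normal_band S f \<longleftrightarrow>
     (\<forall>a\<in>S. \<forall>b\<in>S. f a b \<in> S) \<and>
     (\<forall>a\<in>S. f a a = a) \<and>
     (\<forall>a\<in>S. \<forall>b\<in>S. \<forall>c\<in>S. f a (f b c) = f (f a b) c) \<and>
     (\<forall>a\<in>S. \<forall>b\<in>S. \<forall>c\<in>S. f a (f b c) = f a (f c b))"

definition band_le :: "('a \<Rightarrow> 'a \<Rightarrow> 'a) \<Rightarrow> 'a \<Rightarrow> 'a \<Rightarrow> bool" where
  "band_le f a b \<longleftrightarrow> f b a = b"

definition band_eqv :: "('a \<Rightarrow> 'a \<Rightarrow> 'a) \<Rightarrow> 'a \<Rightarrow> 'a \<Rightarrow> bool" where
  "band_eqv f a b \<longleftrightarrow> band_le f a b \<and> band_le f b a"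

definition homotactic :: "'a set \<Rightarrow> ('a \<Rightarrow> 'a \<Rightarrow> 'a) \<Rightarrow> ('a \<Rightarrow> 'a \<Rightarrow> 'a) \<Rightarrow> bool" where
  "homotactic S f g \<longleftrightarrow> (\<forall>a\<in>S. \<forall>b\<in>S. band_le f a b \<longleftrightarrow> band_le g a b)"

text \<open>Partition system for the algebra (S, f): B \<sigma> i is the band \<odot>^\<sigma>_i, 0 <= i <= ar \<sigma>.
  The second compatibility condition b \<odot>0 \<sigma>(a1..an) = b \<odot>0 a1 \<odot>0 ... \<odot>0 an is written
  with foldl (for constants it reduces to b \<odot>0 \<omega> = b).\<close>
definition partition_system :: "('s \<Rightarrow> nat) \<Rightarrow> 'a set \<Rightarrow> ('s \<Rightarrow> 'a list \<Rightarrow> 'a)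
    \<Rightarrow> ('s \<Rightarrow> nat \<Rightarrow> 'a \<Rightarrow> 'a \<Rightarrow> 'a) \<Rightarrow> bool" where
  "partition_system ar S f B \<longleftrightarrow>
     (\<forall>\<sigma> i. i \<le> ar \<sigma> \<longrightarrow> left_normal_band S (B \<sigma> i)) \<and>
     (\<forall>\<sigma> i \<sigma>' j. i \<le> ar \<sigma> \<and> j \<le> ar \<sigma>' \<longrightarrow> homotactic S (B \<sigma> i) (B \<sigma>' j)) \<and>
     (\<forall>\<sigma> xs b. 1 \<le> ar \<sigma> \<and> length xs = ar \<sigma> \<and> set xs \<subseteq> S \<and> b \<in> S \<longrightarrow>
        B \<sigma> 0 (f \<sigma> xs) b = f \<sigma> (map (\<lambda>i. B \<sigma> (Suc i) (xs ! i) b) [0..<ar \<sigma>])) \<and>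
     (\<forall>\<sigma> xs b. length xs = ar \<sigma> \<and> set xs \<subseteq> S \<and> b \<in> S \<longrightarrow>
        B \<sigma> 0 b (f \<sigma> xs) = foldl (B \<sigma> 0) b xs)"

definition plonka_band :: "('i::semilattice_sup \<Rightarrow> 'a set) \<Rightarrow> ('i \<Rightarrow> 'i \<Rightarrow> 's \<Rightarrow> nat \<Rightarrow> 'a \<Rightarrow> 'a)
    \<Rightarrow> 's \<Rightarrow> nat \<Rightarrow> 'a \<Rightarrow> 'a \<Rightarrow> 'a" where
  "plonka_band A xi \<sigma> i a b = xi (idx A a) (sup (idx A a) (idx A b)) \<sigma> i a"

end

theory Submission
  imports Defs
begin

lemma joinl_ub: "p \<in> set ps \<Longrightarrow> p \<le> joinl ps"
proof (induction ps rule: joinl.induct)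
  case 1 then show ?case by simp
next
  case (2 p) then show ?case by simp
next
  case (3 p q ps) then show ?case by (auto intro: le_supI2)
qed

lemma joinl_sup: "ps \<noteq> [] \<Longrightarrow> joinl (map (\<lambda>p. sup p r) ps) = sup (joinl ps) r"
proof (induction ps rule: joinl.induct)
  case 1 then show ?case by simp
next
  case (2 p) then show ?case by simp
next
  case (3 p q ps) then show ?case by (simp add: sup_aci)
qed

lemma foldl_sup_ge: "(r::'i::semilattice_sup) \<le> foldl sup r ps"
  by (induction ps arbitrary: r) (auto intro: order_trans[OF sup_ge1])

lemma foldl_sup_joinl: "ps \<noteq> [] \<Longrightarrow> foldl sup (r::'i::semilattice_sup) ps = sup r (joinl ps)"
proof (induction ps arbitrary: r rule: joinl.induct)
  case 1 then show ?case by simp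
next
  case (2 p) then show ?case by simp
next
  case (3 p q ps)
  have "foldl sup r (p#q#ps) = foldl sup (sup r p) (q#ps)" by simp
  also have "\<dots> = sup (sup r p) (joinl (q#ps))" by (rule 3) simp
  finally show ?case by (simp add: sup_assoc)
qed

context
  fixes ar :: "'s \<Rightarrow> nat"
    and A :: "'i::semilattice_sup \<Rightarrow> 'a set"
    and opA :: "'i \<Rightarrow> 's \<Rightarrow> 'a list \<Rightarrow> 'a"
    and xi :: "'i \<Rightarrow> 'i \<Rightarrow> 's \<Rightarrow> nat \<Rightarrow> 'a \<Rightarrow> 'a"
  assumes sys: "sl_directed_system ar A opA xi"
begin

lemma sysD: "(\<forall>p. is_algebra ar (A p) (opA p)) \<and>
     (\<forall>p q. p \<noteq> q \<longrightarrow> A p \<inter> A q = {}) \<and>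
     (\<forall>p q. p \<le> q \<longrightarrow> metamorphism ar (A p) (opA p) (A q) (opA q) (xi p q)) \<and>
     (\<forall>p \<sigma> i a. i \<le> ar \<sigma> \<and> a \<in> A p \<longrightarrow> xi p p \<sigma> i a = a) \<and>
     (\<forall>p q r \<sigma> i a. p \<le> q \<and> q \<le> r \<and> i \<le> ar \<sigma> \<and> a \<in> A p \<longrightarrow>
        xi q r \<sigma> i (xi p q \<sigma> i a) = xi p r \<sigma> i a)"
  using sys unfolding sl_directed_system_def .

lemma alg: "is_algebra ar (A p) (opA p)"
  using conjunct1[OF sysD] by (rule spec)

lemma disj: "p \<noteq> q \<Longrightarrow> A p \<inter> A q = {}"
proof -
  assume pq: "p \<noteq> q"
  have "\<forall>p q. p \<noteq> q \<longrightarrow> A p \<inter> A q = {}" using sysD by (elim conjE)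
  then have "p \<noteq> q \<longrightarrow> A p \<inter> A q = {}" by (elim allE)
  then show ?thesis using pq by (rule mp)
qed

lemma meta: "p \<le> q \<Longrightarrow> metamorphism ar (A p) (opA p) (A q) (opA q) (xi p q)"
proof -
  assume pq: "p \<le> q"
  have "\<forall>p q. p \<le> q \<longrightarrow> metamorphism ar (A p) (opA p) (A q) (opA q) (xi p q)" using sysD by (elim conjE)
  then have "p \<le> q \<longrightarrow> metamorphism ar (A p) (opA p) (A q) (opA q) (xi p q)" by (elim allE)
  then show ?thesis using pq by (rule mp)
qed

lemma xi_id: "i \<le> ar \<sigma> \<Longrightarrow> a \<in> A p \<Longrightarrow> xi p p \<sigma> i a = a"
proof -
  assume h: "i \<le> ar \<sigma>" "a \<in> A p"
  have "\<forall>p \<sigma> i a. i \<le> ar \<sigma> \<and> a \<in> A p \<longrightarrow> xi p p \<sigma> i a = a" using sysD by (elim conjE)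
  then have "i \<le> ar \<sigma> \<and> a \<in> A p \<longrightarrow> xi p p \<sigma> i a = a" by (elim allE)
  then show ?thesis using h by simp
qed

lemma xi_trans: "p \<le> q \<Longrightarrow> q \<le> r \<Longrightarrow> i \<le> ar \<sigma> \<Longrightarrow> a \<in> A p \<Longrightarrow> xi q r \<sigma> i (xi p q \<sigma> i a) = xi p r \<sigma> i a"
proof -
  assume h: "p \<le> q" "q \<le> r" "i \<le> ar \<sigma>" "a \<in> A p"
  have "\<forall>p q r \<sigma> i a. p \<le> q \<and> q \<le> r \<and> i \<le> ar \<sigma> \<and> a \<in> A p \<longrightarrow>
        xi q r \<sigma> i (xi p q \<sigma> i a) = xi p r \<sigma> i a" using sysD by (elim conjE)
  then have "p \<le> q \<and> q \<le> r \<and> i \<le> ar \<sigma> \<and> a \<in> A p \<longrightarrow>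
        xi q r \<sigma> i (xi p q \<sigma> i a) = xi p r \<sigma> i a" by (elim allE)
  then show ?thesis using h by simp
qed

lemma xi_in: "p \<le> q \<Longrightarrow> i \<le> ar \<sigma> \<Longrightarrow> a \<in> A p \<Longrightarrow> xi p q \<sigma> i a \<in> A q"
  using meta[of p q] unfolding metamorphism_def by blast

lemma xi_hom: "p \<le> q \<Longrightarrow> length xs = ar \<sigma> \<Longrightarrow> set xs \<subseteq> A p \<Longrightarrow>
   xi p q \<sigma> 0 (opA p \<sigma> xs) = opA q \<sigma> (map (\<lambda>i. xi p q \<sigma> (Suc i) (xs ! i)) [0..<ar \<sigma>])"
  using meta[of p q] unfolding metamorphism_def by blast

lemma op_in: "length xs = ar \<sigma> \<Longrightarrow> set xs \<subseteq> A p \<Longrightarrow> opA p \<sigma> xs \<in> A p"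
  using alg[of p] unfolding is_algebra_def by blast

lemma nonempty: "A p \<noteq> {}"
  using alg[of p] unfolding is_algebra_def by blast

lemma idx_eq: "a \<in> A p \<Longrightarrow> idx A a = p"
  unfolding idx_def using disj by (intro the_equality) auto

lemma idx_in: "a \<in> plonka_carrier A \<Longrightarrow> a \<in> A (idx A a)"
  unfolding plonka_carrier_def using idx_eq by auto

lemma band_eq: "a \<in> A p \<Longrightarrow> b \<in> A q \<Longrightarrow> plonka_band A xi \<sigma> i a b = xi p (sup p q) \<sigma> i a"
  unfolding plonka_band_def using idx_eq by simp

lemma band_in: "a \<in> A p \<Longrightarrow> b \<in> A q \<Longrightarrow> i \<le> ar \<sigma> \<Longrightarrow> plonka_band A xi \<sigma> i a b \<in> A (sup p q)"
  using band_eq xi_in by simp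

lemma band_le_iff: "a \<in> A p \<Longrightarrow> b \<in> A q \<Longrightarrow> i \<le> ar \<sigma> \<Longrightarrow>
   band_le (plonka_band A xi \<sigma> i) a b \<longleftrightarrow> p \<le> q"
proof -
  assume a: "a \<in> A p" and b: "b \<in> A q" and i: "i \<le> ar \<sigma>"
  have e: "plonka_band A xi \<sigma> i b a = xi q (sup q p) \<sigma> i b" using band_eq a b by simp
  show ?thesis
  proof
    assume "band_le (plonka_band A xi \<sigma> i) a b"
    then have "xi q (sup q p) \<sigma> i b = b" using e unfolding band_le_def by simp
    moreover have "xi q (sup q p) \<sigma> i b \<in> A (sup q p)" using xi_in b i by simp
    ultimately have "b \<in> A (sup q p)" by simp
    then have "sup q p = q" using b disj by blast
    then show "p \<le> q" by (metis sup_ge2)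
  next
    assume "p \<le> q"
    then have "sup q p = q" by (simp add: sup_absorb1)
    then show "band_le (plonka_band A xi \<sigma> i) a b" using e xi_id b i unfolding band_le_def by simp
  qed
qed

lemma foldl_band: "b \<in> A r \<Longrightarrow> set xs \<subseteq> plonka_carrier A \<Longrightarrow>
   foldl (plonka_band A xi \<sigma> 0) b xs = xi r (foldl sup r (map (idx A) xs)) \<sigma> 0 b"
proof (induction xs arbitrary: b r)
  case Nil then show ?case using xi_id by simp
next
  case (Cons x xs)
  define p where "p = idx A x"
  have x: "x \<in> A p" using Cons.prems idx_in p_def by auto
  have bx: "plonka_band A xi \<sigma> 0 b x = xi r (sup r p) \<sigma> 0 b" using band_eq Cons.prems x by simp
  have bxin: "xi r (sup r p) \<sigma> 0 b \<in> A (sup r p)" using xi_in Cons.prems by simp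
  have "foldl (plonka_band A xi \<sigma> 0) b (x # xs) = foldl (plonka_band A xi \<sigma> 0) (xi r (sup r p) \<sigma> 0 b) xs"
    using bx by simp
  also have "\<dots> = xi (sup r p) (foldl sup (sup r p) (map (idx A) xs)) \<sigma> 0 (xi r (sup r p) \<sigma> 0 b)"
    using Cons.IH[OF bxin] Cons.prems by simp
  also have "\<dots> = xi r (foldl sup (sup r p) (map (idx A) xs)) \<sigma> 0 b"
  proof (rule xi_trans)
    show "r \<le> sup r p" by simp
    show "sup r p \<le> foldl sup (sup r p) (map (idx A) xs)" by (rule foldl_sup_ge)
    show "0 \<le> ar \<sigma>" by simp
    show "b \<in> A r" using Cons.prems by simp
  qed
  finally show ?case using p_def by simp
qed

end

theorem theorem4p6:
  fixes ar :: "'s \<Rightarrow> nat"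
    and A :: "'i::semilattice_sup \<Rightarrow> 'a set"
    and opA :: "'i \<Rightarrow> 's \<Rightarrow> 'a list \<Rightarrow> 'a"
    and xi :: "'i \<Rightarrow> 'i \<Rightarrow> 's \<Rightarrow> nat \<Rightarrow> 'a \<Rightarrow> 'a"
  assumes sys: "sl_directed_system ar A opA xi"
    and bot: "(\<exists>\<sigma>. ar \<sigma> = 0) \<longrightarrow> (\<exists>b::'i. \<forall>p. b \<le> p)"
  shows "partition_system ar (plonka_carrier A) (plonka_op ar A opA xi) (plonka_band A xi)
    \<and> (\<forall>\<sigma> i. i \<le> ar \<sigma> \<longrightarrow>
         (\<lambda>a. {b \<in> plonka_carrier A. band_eqv (plonka_band A xi \<sigma> i) a b}) ` plonka_carrier A
           = range A)
    \<and> (\<forall>\<sigma> i p q a b. i \<le> ar \<sigma> \<and> a \<in> A p \<and> b \<in> A q \<longrightarrow>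
         (band_le (plonka_band A xi \<sigma> i) a b \<longleftrightarrow> p \<le> q))
    \<and> (\<forall>\<sigma> i p q a b. i \<le> ar \<sigma> \<and> p \<le> q \<and> a \<in> A p \<and> b \<in> A q \<longrightarrow>
         plonka_band A xi \<sigma> i a b = xi p q \<sigma> i a)"
proof -
  note S = idx_in[OF sys]
  let ?S = "plonka_carrier A"
  let ?B = "plonka_band A xi"
  let ?f = "plonka_op ar A opA xi"
  have P4: "\<forall>\<sigma> i p q a b. i \<le> ar \<sigma> \<and> p \<le> q \<and> a \<in> A p \<and> b \<in> A q \<longrightarrow>
         ?B \<sigma> i a b = xi p q \<sigma> i a"
  proof (intro allI impI)
    fix \<sigma> i p q a b assume h: "i \<le> ar \<sigma> \<and> p \<le> q \<and> a \<in> A p \<and> b \<in> A q"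
    then have "sup p q = q" by (simp add: sup_absorb2)
    then show "?B \<sigma> i a b = xi p q \<sigma> i a" using band_eq[OF sys, of a p b q \<sigma> i] h by simp
  qed
  have P3: "\<forall>\<sigma> i p q a b. i \<le> ar \<sigma> \<and> a \<in> A p \<and> b \<in> A q \<longrightarrow>
         (band_le (?B \<sigma> i) a b \<longleftrightarrow> p \<le> q)"
    using band_le_iff[OF sys] by blast
  have P2: "(\<lambda>a. {b \<in> ?S. band_eqv (?B \<sigma> i) a b}) ` ?S = range A" if i: "i \<le> ar \<sigma>" for \<sigma> i
  proof -
    have cls: "{b \<in> ?S. band_eqv (?B \<sigma> i) a b} = A p" if "a \<in> A p" for a p
    proof -
      have "b \<in> ?S \<and> band_eqv (?B \<sigma> i) a b \<longleftrightarrow> b \<in> A p" for b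
      proof
        assume h: "b \<in> ?S \<and> band_eqv (?B \<sigma> i) a b"
        then have "b \<in> A (idx A b)" using S by blast
        with h that i band_le_iff[OF sys] have "p = idx A b"
          unfolding band_eqv_def by (meson order.antisym)
        then show "b \<in> A p" using \<open>b \<in> A (idx A b)\<close> by simp
      next
        assume "b \<in> A p"
        then show "b \<in> ?S \<and> band_eqv (?B \<sigma> i) a b"
          using that i band_le_iff[OF sys] unfolding band_eqv_def plonka_carrier_def by blast
      qed
      then show ?thesis by blast
    qed
    show ?thesis
    proof
      show "(\<lambda>a. {b \<in> ?S. band_eqv (?B \<sigma> i) a b}) ` ?S \<subseteq> range A"
        using cls S by blast
    next
      show "range A \<subseteq> (\<lambda>a. {b \<in> ?S. band_eqv (?B \<sigma> i) a b}) ` ?S"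
      proof
        fix X assume "X \<in> range A"
        then obtain p where X: "X = A p" by blast
        obtain a where a: "a \<in> A p" using nonempty[OF sys] by blast
        then have "a \<in> ?S" unfolding plonka_carrier_def by blast
        then show "X \<in> (\<lambda>a. {b \<in> ?S. band_eqv (?B \<sigma> i) a b}) ` ?S" using cls[OF a] X by blast
      qed
    qed
  qed
  have LNB: "left_normal_band ?S (?B \<sigma> i)" if i: "i \<le> ar \<sigma>" for \<sigma> i
    unfolding left_normal_band_def
  proof (intro conjI ballI)
    fix a b assume a: "a \<in> ?S" and b: "b \<in> ?S"
    show "?B \<sigma> i a b \<in> ?S"
      using band_in[OF sys S[OF a] S[OF b] i] unfolding plonka_carrier_def by blast
  next
    fix a assume a: "a \<in> ?S"
    show "?B \<sigma> i a a = a" using band_eq[OF sys S[OF a] S[OF a]] xi_id[OF sys i S[OF a]] by simp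
  next
    fix a b c assume a: "a \<in> ?S" and b: "b \<in> ?S" and c: "c \<in> ?S"
    define p q r where "p = idx A a" "q = idx A b" "r = idx A c"
    have a': "a \<in> A p" and b': "b \<in> A q" and c': "c \<in> A r" using S a b c p_q_r_def by auto
    have bc: "?B \<sigma> i b c \<in> A (sup q r)" using band_in[OF sys b' c' i] .
    have cb: "?B \<sigma> i c b \<in> A (sup r q)" using band_in[OF sys c' b' i] .
    have ab: "?B \<sigma> i a b \<in> A (sup p q)" using band_in[OF sys a' b' i] .
    have e1: "?B \<sigma> i a (?B \<sigma> i b c) = xi p (sup p (sup q r)) \<sigma> i a"
      using band_eq[OF sys a' bc] .
    have e2: "?B \<sigma> i a (?B \<sigma> i c b) = xi p (sup p (sup q r)) \<sigma> i a"
      using band_eq[OF sys a' cb] by (simp add: sup_commute)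
    have "?B \<sigma> i (?B \<sigma> i a b) c = xi (sup p q) (sup (sup p q) r) \<sigma> i (?B \<sigma> i a b)"
      using band_eq[OF sys ab c'] .
    also have "\<dots> = xi (sup p q) (sup (sup p q) r) \<sigma> i (xi p (sup p q) \<sigma> i a)"
      using band_eq[OF sys a' b'] by simp
    also have "\<dots> = xi p (sup (sup p q) r) \<sigma> i a"
      using xi_trans[OF sys, of p "sup p q" "sup (sup p q) r" i \<sigma> a] i a' by simp
    finally have e3: "?B \<sigma> i (?B \<sigma> i a b) c = xi p (sup p (sup q r)) \<sigma> i a"
      by (simp add: sup_assoc)
    show "?B \<sigma> i a (?B \<sigma> i b c) = ?B \<sigma> i (?B \<sigma> i a b) c" using e1 e3 by simp
    show "?B \<sigma> i a (?B \<sigma> i b c) = ?B \<sigma> i a (?B \<sigma> i c b)" using e1 e2 by simp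
  qed
  have HOM: "homotactic ?S (?B \<sigma> i) (?B \<sigma>' j)" if "i \<le> ar \<sigma>" "j \<le> ar \<sigma>'" for \<sigma> i \<sigma>' j
    unfolding homotactic_def using that band_le_iff[OF sys] S by blast
  have C3: "?B \<sigma> 0 (?f \<sigma> xs) b = ?f \<sigma> (map (\<lambda>i. ?B \<sigma> (Suc i) (xs ! i) b) [0..<ar \<sigma>])"
    if n1: "1 \<le> ar \<sigma>" and len: "length xs = ar \<sigma>" and xs: "set xs \<subseteq> ?S" and b: "b \<in> ?S" for \<sigma> xs b
  proof -
    define n where "n = ar \<sigma>"
    define r where "r = idx A b"
    define pp where "pp = (\<lambda>i. idx A (xs ! i))"
    define q where "q = joinl (map (idx A) xs)"
    define s where "s = sup q r"
    have b': "b \<in> A r" using S b r_def by simp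
    have xin: "xs ! i \<in> A (pp i)" if "i < n" for i
      using S xs that len n_def pp_def nth_mem by (metis subsetD)
    have ne: "xs \<noteq> []" using n1 len by auto
    have ple: "pp i \<le> q" if "i < n" for i
      using joinl_ub[of "pp i" "map (idx A) xs"] that len n_def pp_def q_def by auto
    define ys where "ys = map (\<lambda>i. xi (pp i) q \<sigma> (Suc i) (xs ! i)) [0..<n]"
    have yin: "ys ! i \<in> A q" if "i < n" for i
      using xi_in[OF sys ple[OF that] _ xin[OF that], where i="Suc i" and \<sigma>=\<sigma>] that ys_def n_def by simp
    have ysA: "set ys \<subseteq> A q" using yin ys_def by (auto simp: in_set_conv_nth)
    have lys: "length ys = ar \<sigma>" using ys_def n_def by simp
    have fxs: "?f \<sigma> xs = opA q \<sigma> ys"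
      unfolding plonka_op_def using n1 q_def ys_def n_def pp_def by (simp add: Let_def)
    have fin: "opA q \<sigma> ys \<in> A q" using op_in[OF sys lys ysA] .
    have "?B \<sigma> 0 (?f \<sigma> xs) b = xi q s \<sigma> 0 (opA q \<sigma> ys)"
      using band_eq[OF sys fin b'] fxs s_def by simp
    also have "\<dots> = opA s \<sigma> (map (\<lambda>i. xi q s \<sigma> (Suc i) (ys ! i)) [0..<ar \<sigma>])"
      using xi_hom[OF sys _ lys ysA] s_def by simp
    also have "\<dots> = opA s \<sigma> (map (\<lambda>i. xi (pp i) s \<sigma> (Suc i) (xs ! i)) [0..<ar \<sigma>])"
    proof (rule arg_cong[where f="opA s \<sigma>"], rule map_cong[OF refl])
      fix i assume "i \<in> set [0..<ar \<sigma>]"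
      then have i: "i < n" using n_def by simp
      have "q \<le> s" using s_def by simp
      then show "xi q s \<sigma> (Suc i) (ys ! i) = xi (pp i) s \<sigma> (Suc i) (xs ! i)"
        using xi_trans[OF sys ple[OF i] _ _ xin[OF i], where r=s and i="Suc i" and \<sigma>=\<sigma>] i n_def ys_def
        by simp
    qed
    finally have L: "?B \<sigma> 0 (?f \<sigma> xs) b = opA s \<sigma> (map (\<lambda>i. xi (pp i) s \<sigma> (Suc i) (xs ! i)) [0..<ar \<sigma>])" .
    define zs where "zs = map (\<lambda>i. ?B \<sigma> (Suc i) (xs ! i) b) [0..<n]"
    have zeq: "zs ! i = xi (pp i) (sup (pp i) r) \<sigma> (Suc i) (xs ! i)" if "i < n" for i
      using band_eq[OF sys xin[OF that] b'] that zs_def by simp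
    have zin: "zs ! i \<in> A (sup (pp i) r)" if "i < n" for i
      using xi_in[OF sys sup_ge1 _ xin[OF that], where i="Suc i" and \<sigma>=\<sigma>] zeq[OF that] that n_def by simp
    have lzs: "length zs = n" using zs_def by simp
    have mi: "map (idx A) zs = map (\<lambda>p. sup p r) (map (idx A) xs)"
      by (rule nth_equalityI) (use lzs len n_def idx_eq[OF sys zin] pp_def in auto)
    have jz: "joinl (map (idx A) zs) = s"
      using mi joinl_sup[of "map (idx A) xs" r] ne q_def s_def by simp
    have "?f \<sigma> zs = opA s \<sigma> (map (\<lambda>i. xi (idx A (zs ! i)) s \<sigma> (Suc i) (zs ! i)) [0..<ar \<sigma>])"
      unfolding plonka_op_def using n1 jz by (simp add: Let_def)
    also have "\<dots> = opA s \<sigma> (map (\<lambda>i. xi (pp i) s \<sigma> (Suc i) (xs ! i)) [0..<ar \<sigma>])"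
    proof (rule arg_cong[where f="opA s \<sigma>"], rule map_cong[OF refl])
      fix i assume "i \<in> set [0..<ar \<sigma>]"
      then have i: "i < n" using n_def by simp
      have "sup (pp i) r \<le> s" using ple[OF i] s_def by (simp add: le_supI1)
      then show "xi (idx A (zs ! i)) s \<sigma> (Suc i) (zs ! i) = xi (pp i) s \<sigma> (Suc i) (xs ! i)"
        using idx_eq[OF sys zin[OF i]] zeq[OF i] xi_trans[OF sys, where p="pp i" and q="sup (pp i) r" and r=s and i="Suc i" and \<sigma>=\<sigma> and a="xs ! i"] xin[OF i] i n_def
        by simp
    qed
    finally show ?thesis using L zs_def n_def by simp
  qed
  have C4: "?B \<sigma> 0 b (?f \<sigma> xs) = foldl (?B \<sigma> 0) b xs"
    if len: "length xs = ar \<sigma>" and xs: "set xs \<subseteq> ?S" and b: "b \<in> ?S" for \<sigma> xs b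
  proof -
    define r where "r = idx A b"
    have b': "b \<in> A r" using S b r_def by simp
    have fl: "foldl (?B \<sigma> 0) b xs = xi r (foldl sup r (map (idx A) xs)) \<sigma> 0 b"
      using foldl_band[OF sys b' xs] .
    show ?thesis
    proof (cases "ar \<sigma> = 0")
      case True
      then have x0: "xs = []" using len by simp
      obtain b0 :: 'i where b0: "\<forall>p. b0 \<le> p" using bot True by blast
      have le: "(LEAST p. True) = b0"
        by (rule Least_equality) (use b0 in \<open>auto intro: order.antisym\<close>)
      have fx: "?f \<sigma> xs = opA b0 \<sigma> []" unfolding plonka_op_def using True le by simp
      have w: "opA b0 \<sigma> [] \<in> A b0" using op_in[OF sys, where xs="[]" and \<sigma>=\<sigma> and p=b0] True by simp
      have "?B \<sigma> 0 b (?f \<sigma> xs) = xi r (sup r b0) \<sigma> 0 b" using band_eq[OF sys b' w] fx by simp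
      also have "\<dots> = b" using b0 xi_id[OF sys _ b'] by (simp add: sup_absorb1)
      finally show ?thesis using x0 by simp
    next
      case False
      define pp where "pp = (\<lambda>i. idx A (xs ! i))"
      define q where "q = joinl (map (idx A) xs)"
      have xin: "xs ! i \<in> A (pp i)" if "i < ar \<sigma>" for i
        using S xs that len pp_def nth_mem by (metis subsetD)
      have ne: "xs \<noteq> []" using False len by auto
      have ple: "pp i \<le> q" if "i < ar \<sigma>" for i
        using joinl_ub[of "pp i" "map (idx A) xs"] that len pp_def q_def by auto
      define ys where "ys = map (\<lambda>i. xi (pp i) q \<sigma> (Suc i) (xs ! i)) [0..<ar \<sigma>]"
      have yin: "ys ! i \<in> A q" if "i < ar \<sigma>" for i
        using xi_in[OF sys ple[OF that] _ xin[OF that], where i="Suc i" and \<sigma>=\<sigma>] that ys_def by simp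
      have ysA: "set ys \<subseteq> A q" using yin ys_def by (auto simp: in_set_conv_nth)
      have lys: "length ys = ar \<sigma>" using ys_def by simp
      have fxs: "?f \<sigma> xs = opA q \<sigma> ys"
        unfolding plonka_op_def using False q_def ys_def pp_def by (simp add: Let_def)
      have fin: "opA q \<sigma> ys \<in> A q" using op_in[OF sys lys ysA] .
      have "?B \<sigma> 0 b (?f \<sigma> xs) = xi r (sup r q) \<sigma> 0 b" using band_eq[OF sys b' fin] fxs by simp
      moreover have "foldl sup r (map (idx A) xs) = sup r q"
        using foldl_sup_joinl[of "map (idx A) xs" r] ne q_def by simp
      ultimately show ?thesis using fl by simp
    qed
  qed
  show ?thesis unfolding partition_system_def
    using LNB HOM C3 C4 P2 P3 P4 by blast
qed

end
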